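(* Let $(X,d)$ be a metric space and let $\tilde x=(x_n)$, $\tilde y=(y_n)$ be statistically equivalent sequences of points of $X$. Let $K\subseteq\mathbb N$ be an infinite set with $\liminf_{n\to\infty}\frac{|K(n)|}{n}>0$, where $K(n)=\{k\in K: k\le n\}$, and let $\tilde x'=(x_{n(k)})$ and $\tilde y'=(y_{n(k)})$ be the subsequences of $\tilde x$ and $\tilde y$ with $\{n(k):k\in\mathbb N\}=K$ ($(n(k))$ strictly increasing). Then $\tilde x'$ and $\tilde y'$ are statistically equivalent.
   Context: A set $M\subseteq\mathbb N$ is statistical dense if $\lim_{n\to\infty}|\{m\in M:m\le n\}|/n=1$. Sequences $(u_k),(v_k)$ are statistically equivalent if there is a statistical dense $M\subseteq\mathbb N$ with $u_k=v_k$ for all $k\in M$; subsequences $(x_{n(k)})_k$ are regarded as sequences indexed by $k$. *)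

theory Defs
  imports "HOL-Analysis.Analysis"
begin

definition count_upto :: "nat set \<Rightarrow> nat \<Rightarrow> nat set" where
  "count_upto K n = {k \<in> K. k \<le> n}"

definition stat_dense :: "nat set \<Rightarrow> bool" where
  "stat_dense M \<longleftrightarrow> (\<lambda>n. real (card (count_upto M n)) / real n) \<longlonglongrightarrow> 1"

definition stat_equiv :: "(nat \<Rightarrow> 'a) \<Rightarrow> (nat \<Rightarrow> 'a) \<Rightarrow> bool" where
  "stat_equiv u v \<longleftrightarrow> (\<exists>M. stat_dense M \<and> (\<forall>k\<in>M. u k = v k))"

end

theory Submission
  imports Defs
begin

lemma card_split:
  "card (count_upto M m) + card (count_upto (-M) m) = Suc m"
proof -
  have "count_upto M m \<union> count_upto (-M) m = {..m}" "count_upto M m \<inter> count_upto (-M) m = {}"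
    by (auto simp: count_upto_def)
  moreover have "finite (count_upto M m)" "finite (count_upto (-M) m)"
    by (auto simp: count_upto_def)
  ultimately show ?thesis by (metis card_Un_disjoint card_atMost)
qed

lemma compl_dense:
  assumes "stat_dense M"
  shows "(\<lambda>m. real (card (count_upto (-M) m)) / real m) \<longlonglongrightarrow> 0"
proof -
  have "(\<lambda>m. real (Suc m) / real m - real (card (count_upto M m)) / real m) \<longlonglongrightarrow> 1 - 1"
    using LIMSEQ_Suc_n_over_n assms unfolding stat_dense_def by (intro tendsto_diff) auto
  moreover have "real (Suc m) / real m - real (card (count_upto M m)) / real m
      = real (card (count_upto (-M) m)) / real m" for m
    using card_split[of M m] by (simp add: diff_divide_distrib[symmetric] flip: of_nat_add)
  ultimately show ?thesis by simp
qed

theorem lemma4: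
  fixes x y :: "nat \<Rightarrow> 'a::metric_space"
    and K :: "nat set" and n :: "nat \<Rightarrow> nat"
  assumes "stat_equiv x y"
    and "infinite K"
    and "liminf (\<lambda>m. ereal (real (card (count_upto K m)) / real m)) > 0"
    and "strict_mono n"
    and "range n = K"
  shows "stat_equiv (\<lambda>k. x (n k)) (\<lambda>k. y (n k))"
proof -
  obtain M where M: "stat_dense M" "\<forall>k\<in>M. x k = y k" using assms(1) stat_equiv_def by blast
  obtain z where z: "0 < z" "z < liminf (\<lambda>m. ereal (real (card (count_upto K m)) / real m))"
    using assms(3) dense by blast
  define c where "c = real_of_ereal z"
  have zc: "z = ereal c" using z unfolding c_def by (cases z) auto
  have c0: "c > 0" using z zc by simp
  have ev: "eventually (\<lambda>m. c < real (card (count_upto K m)) / real m) sequentially"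
    using less_LiminfD[OF z(2)] zc by simp
  have nlim: "filterlim n at_top sequentially" using assms(4) filterlim_subseq by blast
  have ev2: "eventually (\<lambda>N. c < real (card (count_upto K (n N))) / real (n N)) sequentially"
    using filterlim_iff[THEN iffD1, OF nlim, rule_format, OF ev] .
  have ev3: "eventually (\<lambda>N. n N > 0) sequentially"
    using filterlim_iff[THEN iffD1, OF nlim, rule_format, OF eventually_gt_at_top[of 0]] .
  define D where "D N = card {k. k \<le> N \<and> n k \<notin> M}" for N
  have cK: "card (count_upto K (n N)) = Suc N" for N
  proof -
    have "count_upto K (n N) = n ` {..N}"
      using assms(4,5) by (auto simp: count_upto_def strict_mono_less_eq)
    moreover have "inj_on n {..N}" using assms(4) strict_mono_imp_inj_on by blast
    ultimately show ?thesis by (simp add: card_image)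
  qed
  have DC: "D N \<le> card (count_upto (-M) (n N))" for N
  proof -
    have "n ` {k. k \<le> N \<and> n k \<notin> M} \<subseteq> count_upto (-M) (n N)"
      using assms(4) by (auto simp: count_upto_def strict_mono_less_eq)
    moreover have "inj_on n {k. k \<le> N \<and> n k \<notin> M}" using assms(4) strict_mono_imp_inj_on by blast
    moreover have "finite (count_upto (-M) (n N))" by (simp add: count_upto_def)
    ultimately show ?thesis unfolding D_def by (metis card_image card_mono)
  qed
  define g where "g m = real (card (count_upto (-M) m)) / real m" for m
  have g0: "g \<longlonglongrightarrow> 0" using compl_dense[OF M(1)] unfolding g_def .
  have gn: "(\<lambda>N. g (n N) / c) \<longlonglongrightarrow> 0"
    using tendsto_divide[OF filterlim_compose[OF g0 nlim] tendsto_const[of c]] c0 by simp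
  have Dlim: "(\<lambda>N. real (D N) / real (Suc N)) \<longlonglongrightarrow> 0"
  proof (rule tendsto_sandwich[OF _ _ tendsto_const gn])
    show "eventually (\<lambda>N. 0 \<le> real (D N) / real (Suc N)) sequentially" by simp
    show "eventually (\<lambda>N. real (D N) / real (Suc N) \<le> g (n N) / c) sequentially"
      using ev2 ev3
    proof eventually_elim
      case (elim N)
      let ?m = "real (n N)" and ?k = "real (Suc N)" and ?C = "real (card (count_upto (-M) (n N)))"
      have m0: "?m > 0" using elim by simp
      have kc: "?k > c * ?m" using elim(1) cK[of N] m0 by (simp add: field_simps)
      have "real (D N) / ?k \<le> ?C / ?k" using DC[of N] by (simp add: divide_right_mono)
      also have "\<dots> \<le> ?C / (c * ?m)"
        using kc c0 m0 by (intro divide_left_mono) auto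
      also have "\<dots> = g (n N) / c" unfolding g_def by (simp add: field_simps)
      finally show ?case .
    qed
  qed
  define M' where "M' = {k. n k \<in> M}"
  have cM: "card (count_upto M' N) + D N = Suc N" for N
  proof -
    have "count_upto M' N \<union> {k. k \<le> N \<and> n k \<notin> M} = {..N}"
      "count_upto M' N \<inter> {k. k \<le> N \<and> n k \<notin> M} = {}"
      by (auto simp: count_upto_def M'_def)
    moreover have "finite (count_upto M' N)" "finite {k. k \<le> N \<and> n k \<notin> M}"
      by (auto simp: count_upto_def)
    ultimately show "card (count_upto M' N) + D N = Suc N"
      unfolding D_def by (metis card_Un_disjoint card_atMost)
  qed
  have DleN: "D N \<le> Suc N" for N using cM[of N] by linarith
  have "stat_dense M'"
    unfolding stat_dense_def
  proof -
    have L: "(\<lambda>N. real (Suc N) / real N * (1 - real (D N) / real (Suc N))) \<longlonglongrightarrow> 1 * (1 - 0)"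
      by (intro tendsto_mult tendsto_diff LIMSEQ_Suc_n_over_n tendsto_const Dlim)
    have E: "real (Suc N) / real N * (1 - real (D N) / real (Suc N))
        = real (card (count_upto M' N)) / real N" for N
      proof -
      have "real (card (count_upto M' N)) = real (Suc N) - real (D N)" using cM[of N] by (simp flip: of_nat_add)
      moreover have "real (Suc N) / real N * (1 - real (D N) / real (Suc N))
          = (real (Suc N) - real (D N)) / real N"
        by (simp add: divide_simps del: of_nat_Suc)
      ultimately show ?thesis by simp
    qed
    show "(\<lambda>N. real (card (count_upto M' N)) / real N) \<longlonglongrightarrow> 1" using L unfolding E by simp
  qed
  moreover have "\<forall>k\<in>M'. x (n k) = y (n k)" using M(2) M'_def by simp
  ultimately show ?thesis unfolding stat_equiv_def by blast
qed

end
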